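(* Let $\mathbb{C}$ be a pointed protomodular category, let $S$ and $T$ be objects of $\mathbb{C}$, and let $X=S\times T$. If $X$ is proto-complete (respectively complete, complete${}^*$, strong-complete), then so are both $S$ and $T$.
   Context: A pointed category with finite limits is protomodular if the split short five lemma holds. A normal monomorphism is a kernel of some morphism; a protosplit monomorphism is a kernel of a split epimorphism; a monomorphism $m:S\to Y$ is Bourn-normal if there is an equivalence relation $(R,r_1,r_2)$ on $Y$ and $\tilde m:S\times S\to R$ with $r_1\tilde m=m\pi_1$, $r_2\tilde m=m\pi_2$ and the square $r_1\tilde m=m\pi_1$ a pullback. An object $X$ is proto-complete if every protosplit monomorphism with domain $X$ is a split monomorphism; complete if every normal monomorphism with domain $X$ is a split monomorphism; complete${}^*$ if every Bourn-normal monomorphism with domain $X$ is a split monomorphism; strong-complete if every protosplit monomorphism with domain $X$ is a split monomorphism with a unique retraction. *)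

theory Defs
  imports Main
begin

text \<open>A (possibly large) category given explicitly by its objects, arrows,
domain, codomain, identities and composition.  cComp g f is "g after f".\<close>

record ('o, 'a) cat =
  cObj  :: "'o set"
  cArr  :: "'a set"
  cDom  :: "'a \<Rightarrow> 'o"
  cCod  :: "'a \<Rightarrow> 'o"
  cId   :: "'o \<Rightarrow> 'a"
  cComp :: "'a \<Rightarrow> 'a \<Rightarrow> 'a"

definition category :: "('o, 'a) cat \<Rightarrow> bool" where
  "category C \<longleftrightarrow>
     (\<forall>f \<in> cArr C. cDom C f \<in> cObj C \<and> cCod C f \<in> cObj C) \<and>
     (\<forall>X \<in> cObj C. cId C X \<in> cArr C \<and> cDom C (cId C X) = X \<and> cCod C (cId C X) = X) \<and>
     (\<forall>f \<in> cArr C. \<forall>g \<in> cArr C. cCod C f = cDom C g \<longrightarrow>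
        cComp C g f \<in> cArr C \<and> cDom C (cComp C g f) = cDom C f \<and> cCod C (cComp C g f) = cCod C g) \<and>
     (\<forall>f \<in> cArr C. cComp C f (cId C (cDom C f)) = f \<and> cComp C (cId C (cCod C f)) f = f) \<and>
     (\<forall>f \<in> cArr C. \<forall>g \<in> cArr C. \<forall>h \<in> cArr C. cCod C f = cDom C g \<and> cCod C g = cDom C h \<longrightarrow>
        cComp C h (cComp C g f) = cComp C (cComp C h g) f)"

definition hom :: "('o, 'a) cat \<Rightarrow> 'a \<Rightarrow> 'o \<Rightarrow> 'o \<Rightarrow> bool" where
  "hom C f X Y \<longleftrightarrow> f \<in> cArr C \<and> cDom C f = X \<and> cCod C f = Y"

definition mono :: "('o, 'a) cat \<Rightarrow> 'a \<Rightarrow> bool" where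
  "mono C m \<longleftrightarrow> m \<in> cArr C \<and>
     (\<forall>W g h. hom C g W (cDom C m) \<and> hom C h W (cDom C m) \<and> cComp C m g = cComp C m h \<longrightarrow> g = h)"

definition iso :: "('o, 'a) cat \<Rightarrow> 'a \<Rightarrow> bool" where
  "iso C f \<longleftrightarrow> f \<in> cArr C \<and>
     (\<exists>g. hom C g (cCod C f) (cDom C f) \<and> cComp C g f = cId C (cDom C f) \<and> cComp C f g = cId C (cCod C f))"

definition is_retraction :: "('o, 'a) cat \<Rightarrow> 'a \<Rightarrow> 'a \<Rightarrow> bool" where
  "is_retraction C r m \<longleftrightarrow> m \<in> cArr C \<and> hom C r (cCod C m) (cDom C m) \<and> cComp C r m = cId C (cDom C m)"

definition split_mono :: "('o, 'a) cat \<Rightarrow> 'a \<Rightarrow> bool" where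
  "split_mono C m \<longleftrightarrow> m \<in> cArr C \<and> (\<exists>r. is_retraction C r m)"

definition split_epi :: "('o, 'a) cat \<Rightarrow> 'a \<Rightarrow> bool" where
  "split_epi C p \<longleftrightarrow> p \<in> cArr C \<and> (\<exists>s. hom C s (cCod C p) (cDom C p) \<and> cComp C p s = cId C (cCod C p))"

definition terminal :: "('o, 'a) cat \<Rightarrow> 'o \<Rightarrow> bool" where
  "terminal C Z \<longleftrightarrow> Z \<in> cObj C \<and> (\<forall>X \<in> cObj C. \<exists>!f. hom C f X Z)"

definition initial :: "('o, 'a) cat \<Rightarrow> 'o \<Rightarrow> bool" where
  "initial C Z \<longleftrightarrow> Z \<in> cObj C \<and> (\<forall>X \<in> cObj C. \<exists>!f. hom C f Z X)"

definition zero_obj :: "('o, 'a) cat \<Rightarrow> 'o \<Rightarrow> bool" where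
  "zero_obj C Z \<longleftrightarrow> initial C Z \<and> terminal C Z"

definition pointed :: "('o, 'a) cat \<Rightarrow> bool" where
  "pointed C \<longleftrightarrow> (\<exists>Z. zero_obj C Z)"

definition zero_arr :: "('o, 'a) cat \<Rightarrow> 'a \<Rightarrow> bool" where
  "zero_arr C f \<longleftrightarrow> f \<in> cArr C \<and>
     (\<exists>Z g h. zero_obj C Z \<and> hom C h (cDom C f) Z \<and> hom C g Z (cCod C f) \<and> f = cComp C g h)"

definition is_pullback :: "('o, 'a) cat \<Rightarrow> 'a \<Rightarrow> 'a \<Rightarrow> 'o \<Rightarrow> 'a \<Rightarrow> 'a \<Rightarrow> bool" where
  "is_pullback C f g P p1 p2 \<longleftrightarrow>
     f \<in> cArr C \<and> g \<in> cArr C \<and> cCod C f = cCod C g \<and>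
     hom C p1 P (cDom C f) \<and> hom C p2 P (cDom C g) \<and> cComp C f p1 = cComp C g p2 \<and>
     (\<forall>W q1 q2. hom C q1 W (cDom C f) \<and> hom C q2 W (cDom C g) \<and> cComp C f q1 = cComp C g q2 \<longrightarrow>
        (\<exists>!u. hom C u W P \<and> cComp C p1 u = q1 \<and> cComp C p2 u = q2))"

definition has_pullbacks :: "('o, 'a) cat \<Rightarrow> bool" where
  "has_pullbacks C \<longleftrightarrow>
     (\<forall>f g. f \<in> cArr C \<and> g \<in> cArr C \<and> cCod C f = cCod C g \<longrightarrow> (\<exists>P p1 p2. is_pullback C f g P p1 p2))"

definition finitely_complete :: "('o, 'a) cat \<Rightarrow> bool" where
  "finitely_complete C \<longleftrightarrow> (\<exists>Z. terminal C Z) \<and> has_pullbacks C"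

definition is_product :: "('o, 'a) cat \<Rightarrow> 'o \<Rightarrow> 'o \<Rightarrow> 'o \<Rightarrow> 'a \<Rightarrow> 'a \<Rightarrow> bool" where
  "is_product C A B P p1 p2 \<longleftrightarrow>
     A \<in> cObj C \<and> B \<in> cObj C \<and> hom C p1 P A \<and> hom C p2 P B \<and>
     (\<forall>W q1 q2. hom C q1 W A \<and> hom C q2 W B \<longrightarrow>
        (\<exists>!u. hom C u W P \<and> cComp C p1 u = q1 \<and> cComp C p2 u = q2))"

definition is_kernel :: "('o, 'a) cat \<Rightarrow> 'a \<Rightarrow> 'a \<Rightarrow> bool" where
  "is_kernel C k f \<longleftrightarrow>
     f \<in> cArr C \<and> k \<in> cArr C \<and> cCod C k = cDom C f \<and> zero_arr C (cComp C f k) \<and>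
     (\<forall>W x. hom C x W (cDom C f) \<and> zero_arr C (cComp C f x) \<longrightarrow>
        (\<exists>!u. hom C u W (cDom C k) \<and> cComp C k u = x))"

text \<open>split short five lemma (for a pointed category with finite limits)\<close>
definition protomodular :: "('o, 'a) cat \<Rightarrow> bool" where
  "protomodular C \<longleftrightarrow>
     (\<forall>A B p s k A' B' p' s' k' u v w.
        hom C p A B \<and> hom C s B A \<and> cComp C p s = cId C B \<and> is_kernel C k p \<and>
        hom C p' A' B' \<and> hom C s' B' A' \<and> cComp C p' s' = cId C B' \<and> is_kernel C k' p' \<and>
        hom C u (cDom C k) (cDom C k') \<and> hom C v A A' \<and> hom C w B B' \<and>
        cComp C v k = cComp C k' u \<and> cComp C p' v = cComp C w p \<and> cComp C v s = cComp C s' w \<and>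
        iso C u \<and> iso C w \<longrightarrow> iso C v)"

definition normal_mono :: "('o, 'a) cat \<Rightarrow> 'a \<Rightarrow> bool" where
  "normal_mono C m \<longleftrightarrow> (\<exists>f. is_kernel C m f)"

definition protosplit_mono :: "('o, 'a) cat \<Rightarrow> 'a \<Rightarrow> bool" where
  "protosplit_mono C m \<longleftrightarrow> (\<exists>p. split_epi C p \<and> is_kernel C m p)"

definition equiv_rel :: "('o, 'a) cat \<Rightarrow> 'o \<Rightarrow> 'o \<Rightarrow> 'a \<Rightarrow> 'a \<Rightarrow> bool" where
  "equiv_rel C Y R r1 r2 \<longleftrightarrow>
     hom C r1 R Y \<and> hom C r2 R Y \<and>
     (\<forall>W a b. hom C a W R \<and> hom C b W R \<and> cComp C r1 a = cComp C r1 b \<and> cComp C r2 a = cComp C r2 b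
        \<longrightarrow> a = b) \<and>
     (\<forall>W x. hom C x W Y \<longrightarrow> (\<exists>a. hom C a W R \<and> cComp C r1 a = x \<and> cComp C r2 a = x)) \<and>
     (\<forall>W a. hom C a W R \<longrightarrow> (\<exists>b. hom C b W R \<and> cComp C r1 b = cComp C r2 a \<and> cComp C r2 b = cComp C r1 a)) \<and>
     (\<forall>W a b. hom C a W R \<and> hom C b W R \<and> cComp C r2 a = cComp C r1 b \<longrightarrow>
        (\<exists>c. hom C c W R \<and> cComp C r1 c = cComp C r1 a \<and> cComp C r2 c = cComp C r2 b))"

definition bourn_normal :: "('o, 'a) cat \<Rightarrow> 'a \<Rightarrow> bool" where
  "bourn_normal C m \<longleftrightarrow> mono C m \<and>
     (\<exists>R r1 r2 P \<pi>1 \<pi>2 mt.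
        equiv_rel C (cCod C m) R r1 r2 \<and> is_product C (cDom C m) (cDom C m) P \<pi>1 \<pi>2 \<and>
        hom C mt P R \<and> cComp C r1 mt = cComp C m \<pi>1 \<and> cComp C r2 mt = cComp C m \<pi>2 \<and>
        is_pullback C r1 m P mt \<pi>1)"

definition proto_complete :: "('o, 'a) cat \<Rightarrow> 'o \<Rightarrow> bool" where
  "proto_complete C X \<longleftrightarrow> (\<forall>m. protosplit_mono C m \<and> cDom C m = X \<longrightarrow> split_mono C m)"

definition complete_obj :: "('o, 'a) cat \<Rightarrow> 'o \<Rightarrow> bool" where
  "complete_obj C X \<longleftrightarrow> (\<forall>m. normal_mono C m \<and> cDom C m = X \<longrightarrow> split_mono C m)"

definition complete_star :: "('o, 'a) cat \<Rightarrow> 'o \<Rightarrow> bool" where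
  "complete_star C X \<longleftrightarrow> (\<forall>m. bourn_normal C m \<and> cDom C m = X \<longrightarrow> split_mono C m)"

definition strong_complete :: "('o, 'a) cat \<Rightarrow> 'o \<Rightarrow> bool" where
  "strong_complete C X \<longleftrightarrow> (\<forall>m. protosplit_mono C m \<and> cDom C m = X \<longrightarrow> (\<exists>!r. is_retraction C r m))"

end

theory Submission imports Defs begin

lemma lift_gen:
  assumes "category C" "cComp C g f = k" "g \<in> cArr C" "f \<in> cArr C" "x \<in> cArr C"
    "cCod C f = cDom C g" "cCod C x = cDom C f"
  shows "cComp C g (cComp C f x) = cComp C k x"
  using assms unfolding category_def by metis

locale pcat =
  fixes C :: "('o,'a) cat" and Z :: 'o
  assumes cat: "category C" and zo: "zero_obj C Z" and fc: "finitely_complete C"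
begin

abbreviation cmp (infixr "\<cdot>" 55) where "g \<cdot> f \<equiv> cComp C g f"

lemma arr_dom[simp]: "f \<in> cArr C \<Longrightarrow> cDom C f \<in> cObj C"
  using cat unfolding category_def by blast
lemma arr_cod[simp]: "f \<in> cArr C \<Longrightarrow> cCod C f \<in> cObj C"
  using cat unfolding category_def by blast
lemma id_arr[simp]: "X \<in> cObj C \<Longrightarrow> cId C X \<in> cArr C"
  using cat unfolding category_def by blast
lemma id_dom[simp]: "X \<in> cObj C \<Longrightarrow> cDom C (cId C X) = X"
  using cat unfolding category_def by blast
lemma id_cod[simp]: "X \<in> cObj C \<Longrightarrow> cCod C (cId C X) = X"
  using cat unfolding category_def by blast
lemma comp_arr[simp]: "f \<in> cArr C \<Longrightarrow> g \<in> cArr C \<Longrightarrow> cCod C f = cDom C g \<Longrightarrow> g \<cdot> f \<in> cArr C"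
  using cat unfolding category_def by blast
lemma comp_dom[simp]: "f \<in> cArr C \<Longrightarrow> g \<in> cArr C \<Longrightarrow> cCod C f = cDom C g \<Longrightarrow> cDom C (g \<cdot> f) = cDom C f"
  using cat unfolding category_def by blast
lemma comp_cod[simp]: "f \<in> cArr C \<Longrightarrow> g \<in> cArr C \<Longrightarrow> cCod C f = cDom C g \<Longrightarrow> cCod C (g \<cdot> f) = cCod C g"
  using cat unfolding category_def by blast
lemma id_r[simp]: "f \<in> cArr C \<Longrightarrow> cDom C f = X \<Longrightarrow> f \<cdot> cId C X = f"
  using cat unfolding category_def by blast
lemma id_l[simp]: "f \<in> cArr C \<Longrightarrow> cCod C f = X \<Longrightarrow> cId C X \<cdot> f = f"
  using cat unfolding category_def by blast
lemma assoc[simp]: "f \<in> cArr C \<Longrightarrow> g \<in> cArr C \<Longrightarrow> h \<in> cArr C \<Longrightarrow> cCod C f = cDom C g \<Longrightarrow>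
   cCod C g = cDom C h \<Longrightarrow> (h \<cdot> g) \<cdot> f = h \<cdot> (g \<cdot> f)"
  using cat unfolding category_def by metis

lemma lift: "g \<cdot> f = k \<Longrightarrow> g \<in> cArr C \<Longrightarrow> f \<in> cArr C \<Longrightarrow> x \<in> cArr C \<Longrightarrow>
    cCod C f = cDom C g \<Longrightarrow> cCod C x = cDom C f \<Longrightarrow> g \<cdot> (f \<cdot> x) = k \<cdot> x"
  using lift_gen[OF cat] by blast

lemma term_u: "terminal C Z' \<Longrightarrow> hom C h X Z' \<Longrightarrow> hom C h' X Z' \<Longrightarrow> h = h'"
  unfolding terminal_def hom_def by (metis arr_dom)

definition toZ where "toZ X = (THE h. hom C h X Z)"
definition fromZ where "fromZ Y = (THE g. hom C g Z Y)"
definition zm where "zm X Y = fromZ Y \<cdot> toZ X"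

lemma Z_obj[simp]: "Z \<in> cObj C" using zo unfolding zero_obj_def terminal_def by blast

lemma toZ: "X \<in> cObj C \<Longrightarrow> hom C (toZ X) X Z"
proof -
  assume X: "X \<in> cObj C"
  have "\<exists>!h. hom C h X Z" using zo X unfolding zero_obj_def terminal_def by blast
  thus ?thesis unfolding toZ_def by (rule theI')
qed
lemma toZ_u: "hom C h X Z \<Longrightarrow> h = toZ X"
  using toZ term_u zo unfolding zero_obj_def hom_def by (metis arr_dom)
lemma fromZ: "Y \<in> cObj C \<Longrightarrow> hom C (fromZ Y) Z Y"
proof -
  assume X: "Y \<in> cObj C"
  have "\<exists>!h. hom C h Z Y" using zo X unfolding zero_obj_def initial_def by blast
  thus ?thesis unfolding fromZ_def by (rule theI')
qed
lemma fromZ_u: "hom C h Z Y \<Longrightarrow> h = fromZ Y"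
proof -
  assume h: "hom C h Z Y"
  hence Y: "Y \<in> cObj C" unfolding hom_def by auto
  have "\<exists>!h. hom C h Z Y" using zo Y unfolding zero_obj_def initial_def by blast
  thus ?thesis using h fromZ[OF Y] by blast
qed

lemma zm_arr[simp]: "X \<in> cObj C \<Longrightarrow> Y \<in> cObj C \<Longrightarrow> zm X Y \<in> cArr C"
  and zm_dom[simp]: "X \<in> cObj C \<Longrightarrow> Y \<in> cObj C \<Longrightarrow> cDom C (zm X Y) = X"
  and zm_cod[simp]: "X \<in> cObj C \<Longrightarrow> Y \<in> cObj C \<Longrightarrow> cCod C (zm X Y) = Y"
  using toZ[of X] fromZ[of Y] unfolding zm_def hom_def by auto

lemma zm_l[simp]: "g \<in> cArr C \<Longrightarrow> cDom C g = Y \<Longrightarrow> X \<in> cObj C \<Longrightarrow> g \<cdot> zm X Y = zm X (cCod C g)"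
proof -
  assume a: "g \<in> cArr C" "cDom C g = Y" "X \<in> cObj C"
  have Y: "Y \<in> cObj C" using a by auto
  have "g \<cdot> zm X Y = (g \<cdot> fromZ Y) \<cdot> toZ X"
    using a toZ[of X] fromZ[OF Y] unfolding zm_def hom_def by simp
  also have "g \<cdot> fromZ Y = fromZ (cCod C g)"
    using a fromZ[OF Y] by (intro fromZ_u) (auto simp: hom_def)
  finally show ?thesis unfolding zm_def .
qed

lemma zm_r[simp]: "x \<in> cArr C \<Longrightarrow> cCod C x = X \<Longrightarrow> Y \<in> cObj C \<Longrightarrow> zm X Y \<cdot> x = zm (cDom C x) Y"
proof -
  assume a: "x \<in> cArr C" "cCod C x = X" "Y \<in> cObj C"
  have X: "X \<in> cObj C" using a by auto
  have "zm X Y \<cdot> x = fromZ Y \<cdot> (toZ X \<cdot> x)"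
    using a toZ[OF X] fromZ[of Y] unfolding zm_def hom_def by simp
  also have "toZ X \<cdot> x = toZ (cDom C x)"
    using a toZ[OF X] by (intro toZ_u) (auto simp: hom_def)
  finally show ?thesis unfolding zm_def .
qed

lemma zero_arr_iff: "f \<in> cArr C \<Longrightarrow> zero_arr C f \<longleftrightarrow> f = zm (cDom C f) (cCod C f)"
proof
  assume f: "f \<in> cArr C" and "zero_arr C f"
  define X where "X = cDom C f"
  define Y where "Y = cCod C f"
  have X: "X \<in> cObj C" and Y: "Y \<in> cObj C" using f X_def Y_def by auto
  obtain Z' g h where z: "zero_obj C Z'" "hom C h X Z'" "hom C g Z' Y" "f = g \<cdot> h"
    using \<open>zero_arr C f\<close> unfolding zero_arr_def X_def Y_def by blast
  have Z': "Z' \<in> cObj C" using z unfolding zero_obj_def terminal_def by blast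
  obtain a where a: "hom C a Z Z'" using zo Z' unfolding zero_obj_def initial_def by blast
  have "h = a \<cdot> toZ X"
  proof -
    have "hom C (a \<cdot> toZ X) X Z'" using a toZ[OF X] by (auto simp: hom_def)
    thus ?thesis using z(1,2) term_u unfolding zero_obj_def by blast
  qed
  hence "f = g \<cdot> (a \<cdot> toZ X)" using z(4) by simp
  also have "\<dots> = (g \<cdot> a) \<cdot> toZ X" using z a toZ[OF X] unfolding hom_def
    by (intro assoc[symmetric]) auto
  also have "g \<cdot> a = fromZ Y" using a z by (intro fromZ_u) (auto simp: hom_def)
  finally show "f = zm (cDom C f) (cCod C f)" unfolding zm_def X_def Y_def .
next
  assume f: "f \<in> cArr C" and e: "f = zm (cDom C f) (cCod C f)"
  define X where "X = cDom C f"
  define Y where "Y = cCod C f"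
  have X: "X \<in> cObj C" and Y: "Y \<in> cObj C" using f X_def Y_def by auto
  have e2: "f = fromZ Y \<cdot> toZ X" using e unfolding zm_def X_def Y_def .
  show "zero_arr C f" unfolding zero_arr_def
    apply (rule conjI[OF f])
    apply (rule exI[of _ Z], rule exI[of _ "fromZ Y"], rule exI[of _ "toZ X"])
    using zo toZ[OF X] fromZ[OF Y] e2 unfolding X_def Y_def by blast
qed

lemma zero_zm: "X \<in> cObj C \<Longrightarrow> Y \<in> cObj C \<Longrightarrow> zero_arr C (zm X Y)"
  by (simp add: zero_arr_iff)


lemma prod_facts:
  assumes "is_product C A B P p1 p2"
  shows "p1 \<in> cArr C" "cDom C p1 = P" "cCod C p1 = A" "p2 \<in> cArr C" "cDom C p2 = P"
    "cCod C p2 = B" "A \<in> cObj C" "B \<in> cObj C" "P \<in> cObj C"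
  using assms unfolding is_product_def hom_def by (auto dest: arr_dom)

lemma prod_tup:
  assumes pr: "is_product C A B P p1 p2" and q: "hom C q1 W A" "hom C q2 W B"
  obtains u where "u \<in> cArr C" "cDom C u = W" "cCod C u = P" "p1 \<cdot> u = q1" "p2 \<cdot> u = q2"
     "\<And>x. x \<in> cArr C \<Longrightarrow> cCod C x = W \<Longrightarrow> p1 \<cdot> (u \<cdot> x) = q1 \<cdot> x"
     "\<And>x. x \<in> cArr C \<Longrightarrow> cCod C x = W \<Longrightarrow> p2 \<cdot> (u \<cdot> x) = q2 \<cdot> x"
proof -
  from pr q obtain u where u: "hom C u W P" "p1 \<cdot> u = q1" "p2 \<cdot> u = q2"
    unfolding is_product_def by blast
  note pf = prod_facts[OF pr]
  show thesis
  proof (rule that)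
    show "u \<in> cArr C" "cDom C u = W" "cCod C u = P" using u unfolding hom_def by auto
    show "p1 \<cdot> u = q1" "p2 \<cdot> u = q2" by fact+
    fix x assume x: "x \<in> cArr C" "cCod C x = W"
    show "p1 \<cdot> (u \<cdot> x) = q1 \<cdot> x" using u pf x unfolding hom_def by (intro lift) auto
    show "p2 \<cdot> (u \<cdot> x) = q2 \<cdot> x" using u pf x unfolding hom_def by (intro lift) auto
  qed
qed

lemma prod_eq:
  assumes pr: "is_product C A B P p1 p2" and uv: "u \<in> cArr C" "v \<in> cArr C" "cDom C u = cDom C v"
    "cCod C u = P" "cCod C v = P" and e: "p1 \<cdot> u = p1 \<cdot> v" "p2 \<cdot> u = p2 \<cdot> v"
  shows "u = v"
proof -
  note pf = prod_facts[OF pr]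
  have "hom C (p1 \<cdot> u) (cDom C u) A" "hom C (p2 \<cdot> u) (cDom C u) B"
    using pf uv unfolding hom_def by auto
  then have "\<exists>!w. hom C w (cDom C u) P \<and> p1 \<cdot> w = p1 \<cdot> u \<and> p2 \<cdot> w = p2 \<cdot> u"
    using pr unfolding is_product_def by blast
  moreover have "hom C u (cDom C u) P" "hom C v (cDom C u) P" using uv unfolding hom_def by auto
  ultimately show ?thesis using e by metis
qed

lemma prod_ex:
  assumes A: "A \<in> cObj C" and B: "B \<in> cObj C"
  obtains P p1 p2 where "is_product C A B P p1 p2"
proof -
  have hp: "has_pullbacks C" using fc unfolding finitely_complete_def by auto
  have tA: "hom C (toZ A) A Z" and tB: "hom C (toZ B) B Z" using toZ A B by auto
  obtain P p1 p2 where pb: "is_pullback C (toZ A) (toZ B) P p1 p2"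
    using hp tA tB unfolding has_pullbacks_def hom_def by metis
  have "is_product C A B P p1 p2" unfolding is_product_def
  proof (intro conjI allI impI)
    show "A \<in> cObj C" "B \<in> cObj C" by fact+
    show "hom C p1 P A" "hom C p2 P B" using pb tA tB unfolding is_pullback_def hom_def by auto
    fix W q1 q2 assume q: "hom C q1 W A \<and> hom C q2 W B"
    have "hom C (toZ A \<cdot> q1) W Z" "hom C (toZ B \<cdot> q2) W Z" using q tA tB unfolding hom_def by auto
    hence "toZ A \<cdot> q1 = toZ B \<cdot> q2" using toZ_u by metis
    moreover have U: "\<forall>W q1 q2. hom C q1 W (cDom C (toZ A)) \<and> hom C q2 W (cDom C (toZ B)) \<and>
       toZ A \<cdot> q1 = toZ B \<cdot> q2 \<longrightarrow> (\<exists>!u. hom C u W P \<and> p1 \<cdot> u = q1 \<and> p2 \<cdot> u = q2)"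
      using pb unfolding is_pullback_def by blast
    moreover have "cDom C (toZ A) = A" "cDom C (toZ B) = B" using tA tB unfolding hom_def by auto
    ultimately show "\<exists>!u. hom C u W P \<and> p1 \<cdot> u = q1 \<and> p2 \<cdot> u = q2"
      using q by simp
  qed
  thus thesis by (rule that)
qed

lemma prod_sym: "is_product C A B P p1 p2 \<Longrightarrow> is_product C B A P p2 p1"
  unfolding is_product_def
proof (elim conjE, intro conjI allI impI)
  fix W q1 q2
  assume H: "\<forall>W q1 q2. hom C q1 W A \<and> hom C q2 W B \<longrightarrow> (\<exists>!u. hom C u W P \<and> p1 \<cdot> u = q1 \<and> p2 \<cdot> u = q2)"
    and q: "hom C q1 W B \<and> hom C q2 W A"
  from H q have "\<exists>!u. hom C u W P \<and> p1 \<cdot> u = q2 \<and> p2 \<cdot> u = q1" by blast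
  thus "\<exists>!u. hom C u W P \<and> p2 \<cdot> u = q1 \<and> p1 \<cdot> u = q2" by (metis (no_types, lifting))
qed auto

end

locale xfer = pcat +
  fixes S T X pS pT m Y Y' qY qT m'
  assumes prX: "is_product C S T X pS pT"
  and m: "m \<in> cArr C" "cDom C m = S" "cCod C m = Y"
  and prY: "is_product C Y T Y' qY qT"
  and m': "m' \<in> cArr C" "cDom C m' = X" "cCod C m' = Y'" "qY \<cdot> m' = m \<cdot> pS" "qT \<cdot> m' = pT"
begin

lemmas pX[simp] = prod_facts[OF prX]
lemmas pY[simp] = prod_facts[OF prY]
lemmas mm[simp] = m m'

lemma m'1[simp]: "x \<in> cArr C \<Longrightarrow> cCod C x = X \<Longrightarrow> qY \<cdot> (m' \<cdot> x) = m \<cdot> (pS \<cdot> x)"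
  using lift[OF m'(4)] by simp
lemma m'2[simp]: "x \<in> cArr C \<Longrightarrow> cCod C x = X \<Longrightarrow> qT \<cdot> (m' \<cdot> x) = pT \<cdot> x"
  using lift[OF m'(5)] by simp

lemma L1: assumes "split_mono C m'" shows "split_mono C m"
proof -
  obtain r' where "is_retraction C r' m'" using assms unfolding split_mono_def by auto
  hence r': "r' \<in> cArr C" "cDom C r' = Y'" "cCod C r' = X" "r' \<cdot> m' = cId C X"
    unfolding is_retraction_def hom_def by auto
  obtain e where e: "e \<in> cArr C" "cDom C e = Y" "cCod C e = Y'" "qY \<cdot> e = cId C Y" "qT \<cdot> e = zm Y T"
     "\<And>x. x \<in> cArr C \<Longrightarrow> cCod C x = Y \<Longrightarrow> qY \<cdot> (e \<cdot> x) = cId C Y \<cdot> x"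
     "\<And>x. x \<in> cArr C \<Longrightarrow> cCod C x = Y \<Longrightarrow> qT \<cdot> (e \<cdot> x) = zm Y T \<cdot> x"
    by (rule prod_tup[OF prY, of "cId C Y" Y "zm Y T"]) (auto simp: hom_def)
  obtain i where i: "i \<in> cArr C" "cDom C i = S" "cCod C i = X" "pS \<cdot> i = cId C S" "pT \<cdot> i = zm S T"
     "\<And>x. x \<in> cArr C \<Longrightarrow> cCod C x = S \<Longrightarrow> pS \<cdot> (i \<cdot> x) = cId C S \<cdot> x"
     "\<And>x. x \<in> cArr C \<Longrightarrow> cCod C x = S \<Longrightarrow> pT \<cdot> (i \<cdot> x) = zm S T \<cdot> x"
    by (rule prod_tup[OF prX, of "cId C S" S "zm S T"]) (auto simp: hom_def)
  have em: "e \<cdot> m = m' \<cdot> i"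
    by (rule prod_eq[OF prY]) (simp_all add: e i)
  have "(pS \<cdot> (r' \<cdot> e)) \<cdot> m = pS \<cdot> (r' \<cdot> (e \<cdot> m))" using e r' by simp
  also have "\<dots> = pS \<cdot> (r' \<cdot> (m' \<cdot> i))" by (simp add: em)
  also have "r' \<cdot> (m' \<cdot> i) = cId C X \<cdot> i" using r' i by (intro lift) auto
  also have "pS \<cdot> (cId C X \<cdot> i) = cId C S" using i by simp
  finally have "(pS \<cdot> (r' \<cdot> e)) \<cdot> m = cId C S" .
  hence "is_retraction C (pS \<cdot> (r' \<cdot> e)) m" unfolding is_retraction_def hom_def using e r' by simp
  thus ?thesis unfolding split_mono_def using m by blast
qed


lemma e_ex:
  obtains e where "e \<in> cArr C" "cDom C e = Y" "cCod C e = Y'" "qY \<cdot> e = cId C Y" "qT \<cdot> e = zm Y T"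
     "\<And>x. x \<in> cArr C \<Longrightarrow> cCod C x = Y \<Longrightarrow> qY \<cdot> (e \<cdot> x) = cId C Y \<cdot> x"
     "\<And>x. x \<in> cArr C \<Longrightarrow> cCod C x = Y \<Longrightarrow> qT \<cdot> (e \<cdot> x) = zm Y T \<cdot> x"
    by (rule prod_tup[OF prY, of "cId C Y" Y "zm Y T"]) (auto simp: hom_def)

lemma L2: assumes k: "is_kernel C m f" shows "is_kernel C m' (f \<cdot> qY)"
proof -
  have f: "f \<in> cArr C" "cDom C f = Y" and z: "zero_arr C (f \<cdot> m)"
    using k m(3) unfolding is_kernel_def by auto
  have U: "\<forall>W x. hom C x W (cDom C f) \<and> zero_arr C (f \<cdot> x) \<longrightarrow> (\<exists>!u. hom C u W (cDom C m) \<and> m \<cdot> u = x)"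
    using k unfolding is_kernel_def by blast
  define B where "B = cCod C f"
  have B: "B \<in> cObj C" "cCod C f = B" using f B_def by auto
  have fm: "f \<cdot> m = zm S B" using z f zero_arr_iff[of "f \<cdot> m"] B by simp
  have fm1: "\<And>x. x \<in> cArr C \<Longrightarrow> cCod C x = S \<Longrightarrow> f \<cdot> (m \<cdot> x) = zm (cDom C x) B"
    using lift[OF fm] f B by simp
  show ?thesis unfolding is_kernel_def
  proof (intro conjI allI impI)
    show "f \<cdot> qY \<in> cArr C" "m' \<in> cArr C" "cCod C m' = cDom C (f \<cdot> qY)" using f by simp_all
    have "(f \<cdot> qY) \<cdot> m' = zm X B" using f B fm1 by simp
    thus "zero_arr C ((f \<cdot> qY) \<cdot> m')" using B by (simp add: zero_zm)
    fix W x assume H: "hom C x W (cDom C (f \<cdot> qY)) \<and> zero_arr C ((f \<cdot> qY) \<cdot> x)"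
    hence x: "x \<in> cArr C" "cDom C x = W" "cCod C x = Y'" using f unfolding hom_def by auto
    have "zero_arr C (f \<cdot> (qY \<cdot> x))" using H x f by simp
    moreover have "hom C (qY \<cdot> x) W (cDom C f)" using x f unfolding hom_def by simp
    ultimately have "\<exists>!v. hom C v W (cDom C m) \<and> m \<cdot> v = qY \<cdot> x" using U by blast
    hence "\<exists>!v. hom C v W S \<and> m \<cdot> v = qY \<cdot> x" by (simp only: m(2))
    then obtain v where v: "hom C v W S" "m \<cdot> v = qY \<cdot> x"
      and vu: "\<And>v2. hom C v2 W S \<Longrightarrow> m \<cdot> v2 = qY \<cdot> x \<Longrightarrow> v2 = v" by blast
    have v': "v \<in> cArr C" "cDom C v = W" "cCod C v = S" using v unfolding hom_def by auto
    obtain u where u: "u \<in> cArr C" "cDom C u = W" "cCod C u = X" "pS \<cdot> u = v" "pT \<cdot> u = qT \<cdot> x"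
      by (rule prod_tup[OF prX, of v W "qT \<cdot> x"]) (use v' x in \<open>auto simp: hom_def\<close>)
    show "\<exists>!u. hom C u W (cDom C m') \<and> m' \<cdot> u = x"
    proof (rule ex1I[of _ u])
      have "m' \<cdot> u = x" by (rule prod_eq[OF prY]) (simp_all add: u x v(2))
      thus "hom C u W (cDom C m') \<and> m' \<cdot> u = x" using u unfolding hom_def by simp
      fix u2 assume H2: "hom C u2 W (cDom C m') \<and> m' \<cdot> u2 = x"
      hence u2: "u2 \<in> cArr C" "cDom C u2 = W" "cCod C u2 = X" "m' \<cdot> u2 = x" unfolding hom_def by auto
      have "m \<cdot> (pS \<cdot> u2) = qY \<cdot> (m' \<cdot> u2)" using u2(1-3) by simp
      also have "\<dots> = qY \<cdot> x" using u2 by simp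
      finally have "pS \<cdot> u2 = v" using u2 by (intro vu) (auto simp: hom_def)
      hence e1: "pS \<cdot> u2 = pS \<cdot> u" using u(4) by simp
      have "pT \<cdot> u2 = qT \<cdot> (m' \<cdot> u2)" using u2(1-3) by simp
      hence e2: "pT \<cdot> u2 = pT \<cdot> u" using u2(4) u(5) by simp
      have "cDom C u2 = cDom C u" using u2(2) u(2) by simp
      from prod_eq[OF prX u2(1) u(1) this u2(3) u(3) e1 e2] show "u2 = u" .
    qed
  qed
qed

lemma L3: assumes "split_epi C p" "cDom C p = Y" shows "split_epi C (p \<cdot> qY)"
proof -
  obtain s where s: "hom C s (cCod C p) (cDom C p)" "p \<cdot> s = cId C (cCod C p)"
    using assms unfolding split_epi_def by auto
  have p: "p \<in> cArr C" using assms unfolding split_epi_def by auto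
  define B where "B = cCod C p"
  have B: "B \<in> cObj C" "cCod C p = B" using p B_def by auto
  have s': "s \<in> cArr C" "cDom C s = B" "cCod C s = Y" using s assms B unfolding hom_def by auto
  obtain t where t: "t \<in> cArr C" "cDom C t = B" "cCod C t = Y'" "qY \<cdot> t = s" "qT \<cdot> t = zm B T"
    by (rule prod_tup[OF prY, of s B "zm B T"]) (use s' B in \<open>auto simp: hom_def\<close>)
  have "(p \<cdot> qY) \<cdot> t = cId C B" using p assms t s B by simp
  thus ?thesis unfolding split_epi_def hom_def using p assms t B
    by (intro conjI exI[of _ t]) simp_all
qed

lemma L4: assumes u: "\<exists>!r. is_retraction C r m'" shows "\<exists>!r. is_retraction C r m"
proof -
  have "split_mono C m'" using u unfolding split_mono_def by (auto simp: m')
  hence "split_mono C m" by (rule L1)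
  then obtain r0 where r0: "is_retraction C r0 m" unfolding split_mono_def by auto
  obtain e where e: "e \<in> cArr C" "cDom C e = Y" "cCod C e = Y'" "qY \<cdot> e = cId C Y" "qT \<cdot> e = zm Y T"
    by (rule e_ex)
  have key: "r = pS \<cdot> (r' \<cdot> e)" if r: "is_retraction C r m" and
    r': "r' \<in> cArr C" "cDom C r' = Y'" "cCod C r' = X" "pS \<cdot> r' = r \<cdot> qY" for r r'
  proof -
    have rr: "r \<in> cArr C" "cDom C r = Y" "cCod C r = S" using r unfolding is_retraction_def hom_def by auto
    have "pS \<cdot> (r' \<cdot> e) = (r \<cdot> qY) \<cdot> e" using r' e by (intro lift) auto
    thus ?thesis using rr e by simp
  qed
  have mk: "\<exists>r'. r' \<in> cArr C \<and> cDom C r' = Y' \<and> cCod C r' = X \<and> pS \<cdot> r' = r \<cdot> qY \<and> is_retraction C r' m'"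
    if r: "is_retraction C r m" for r
  proof -
    have rr: "r \<in> cArr C" "cDom C r = Y" "cCod C r = S" "r \<cdot> m = cId C S"
      using r unfolding is_retraction_def hom_def by auto
    have rm: "\<And>x. x \<in> cArr C \<Longrightarrow> cCod C x = S \<Longrightarrow> r \<cdot> (m \<cdot> x) = x"
      using lift[OF rr(4)] rr by simp
    obtain r' where r': "r' \<in> cArr C" "cDom C r' = Y'" "cCod C r' = X" "pS \<cdot> r' = r \<cdot> qY" "pT \<cdot> r' = qT"
     "\<And>x. x \<in> cArr C \<Longrightarrow> cCod C x = Y' \<Longrightarrow> pS \<cdot> (r' \<cdot> x) = (r \<cdot> qY) \<cdot> x"
     "\<And>x. x \<in> cArr C \<Longrightarrow> cCod C x = Y' \<Longrightarrow> pT \<cdot> (r' \<cdot> x) = qT \<cdot> x"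
      by (rule prod_tup[OF prX, of "r \<cdot> qY" Y' qT]) (use rr in \<open>auto simp: hom_def\<close>)
    have "r' \<cdot> m' = cId C X" by (rule prod_eq[OF prX]) (simp_all add: r' rr rm m')
    hence "is_retraction C r' m'" unfolding is_retraction_def hom_def using r' by simp
    thus ?thesis using r' by blast
  qed
  show ?thesis
  proof (rule ex1I[of _ r0])
    show "is_retraction C r0 m" by fact
    fix r assume r: "is_retraction C r m"
    obtain r1' where r1': "r1' \<in> cArr C" "cDom C r1' = Y'" "cCod C r1' = X" "pS \<cdot> r1' = r \<cdot> qY" "is_retraction C r1' m'"
      using mk[OF r] by blast
    obtain r2' where r2': "r2' \<in> cArr C" "cDom C r2' = Y'" "cCod C r2' = X" "pS \<cdot> r2' = r0 \<cdot> qY" "is_retraction C r2' m'"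
      using mk[OF r0] by blast
    have "r1' = r2'" using u r1'(5) r2'(5) by blast
    thus "r = r0" using key[OF r r1'(1-4)] key[OF r0 r2'(1-4)] by simp
  qed
qed

lemma L5: assumes bn: "bourn_normal C m" shows "bourn_normal C m'"
proof -
  obtain R r1 r2 P p1 p2 mt where mono: "mono C m" and
    er0: "equiv_rel C (cCod C m) R r1 r2" and prP0: "is_product C (cDom C m) (cDom C m) P p1 p2" and
    mt0: "hom C mt P R" "r1 \<cdot> mt = m \<cdot> p1" "r2 \<cdot> mt = m \<cdot> p2" and pb: "is_pullback C r1 m P mt p1"
    using bn unfolding bourn_normal_def by blast
  have er: "equiv_rel C Y R r1 r2" using er0 m by simp
  have prP: "is_product C S S P p1 p2" using prP0 m by simp
  note pP[simp] = prod_facts[OF prP]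
  have r[simp]: "r1 \<in> cArr C" "cDom C r1 = R" "cCod C r1 = Y" "r2 \<in> cArr C" "cDom C r2 = R" "cCod C r2 = Y"
    using er unfolding equiv_rel_def hom_def by auto
  have Robj[simp]: "R \<in> cObj C" using r(1,2) arr_dom by blast
  have jm: "\<And>a b W. hom C a W R \<Longrightarrow> hom C b W R \<Longrightarrow> r1 \<cdot> a = r1 \<cdot> b \<Longrightarrow> r2 \<cdot> a = r2 \<cdot> b \<Longrightarrow> a = b"
    using er unfolding equiv_rel_def by blast
  have rf: "\<And>x W. hom C x W Y \<Longrightarrow> \<exists>a. hom C a W R \<and> r1 \<cdot> a = x \<and> r2 \<cdot> a = x"
    using er unfolding equiv_rel_def by blast
  have sy: "\<And>a W. hom C a W R \<Longrightarrow> \<exists>b. hom C b W R \<and> r1 \<cdot> b = r2 \<cdot> a \<and> r2 \<cdot> b = r1 \<cdot> a"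
    using er unfolding equiv_rel_def by blast
  have tr: "\<And>a b W. hom C a W R \<Longrightarrow> hom C b W R \<Longrightarrow> r2 \<cdot> a = r1 \<cdot> b \<Longrightarrow>
      \<exists>c. hom C c W R \<and> r1 \<cdot> c = r1 \<cdot> a \<and> r2 \<cdot> c = r2 \<cdot> b"
    using er unfolding equiv_rel_def by blast
  have pbU: "\<And>W q1 q2. hom C q1 W R \<Longrightarrow> hom C q2 W S \<Longrightarrow> r1 \<cdot> q1 = m \<cdot> q2 \<Longrightarrow>
      \<exists>!u. hom C u W P \<and> mt \<cdot> u = q1 \<and> p1 \<cdot> u = q2"
  proof -
    fix W q1 q2 assume "hom C q1 W R" "hom C q2 W S" "r1 \<cdot> q1 = m \<cdot> q2"
    moreover have "\<forall>W q1 q2. hom C q1 W (cDom C r1) \<and> hom C q2 W (cDom C m) \<and> r1 \<cdot> q1 = m \<cdot> q2 \<longrightarrow>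
        (\<exists>!u. hom C u W P \<and> mt \<cdot> u = q1 \<and> p1 \<cdot> u = q2)" using pb unfolding is_pullback_def by blast
    ultimately show "\<exists>!u. hom C u W P \<and> mt \<cdot> u = q1 \<and> p1 \<cdot> u = q2" by simp
  qed
  have mtf[simp]: "mt \<in> cArr C" "cDom C mt = P" "cCod C mt = R" using mt0 unfolding hom_def by auto
  have mt1[simp]: "\<And>x. x \<in> cArr C \<Longrightarrow> cCod C x = P \<Longrightarrow> r1 \<cdot> (mt \<cdot> x) = m \<cdot> (p1 \<cdot> x)"
    using lift[OF mt0(2)] by simp
  have mt2[simp]: "\<And>x. x \<in> cArr C \<Longrightarrow> cCod C x = P \<Longrightarrow> r2 \<cdot> (mt \<cdot> x) = m \<cdot> (p2 \<cdot> x)"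
    using lift[OF mt0(3)] by simp
  have monoU: "\<And>g h W. hom C g W S \<Longrightarrow> hom C h W S \<Longrightarrow> m \<cdot> g = m \<cdot> h \<Longrightarrow> g = h"
    using mono m(2) unfolding mono_def by blast

  obtain Q t1 t2 where prQ: "is_product C T T Q t1 t2" using prod_ex[of T T] by auto
  note pQ[simp] = prod_facts[OF prQ]
  obtain RR rho sig where prR: "is_product C R Q RR rho sig" using prod_ex[of R Q] by auto
  note pR[simp] = prod_facts[OF prR]
  obtain PP w1 w2 where prPP: "is_product C X X PP w1 w2" using prod_ex[of X X] by auto
  note pPP[simp] = prod_facts[OF prPP]

  obtain r1' where r1'[simp]: "r1' \<in> cArr C" "cDom C r1' = RR" "cCod C r1' = Y'" "qY \<cdot> r1' = r1 \<cdot> rho" "qT \<cdot> r1' = t1 \<cdot> sig"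
     "\<And>x. x \<in> cArr C \<Longrightarrow> cCod C x = RR \<Longrightarrow> qY \<cdot> (r1' \<cdot> x) = (r1 \<cdot> rho) \<cdot> x"
     "\<And>x. x \<in> cArr C \<Longrightarrow> cCod C x = RR \<Longrightarrow> qT \<cdot> (r1' \<cdot> x) = (t1 \<cdot> sig) \<cdot> x"
    by (rule prod_tup[OF prY, of "r1 \<cdot> rho" RR "t1 \<cdot> sig"]) (auto simp: hom_def)
  obtain r2' where r2'[simp]: "r2' \<in> cArr C" "cDom C r2' = RR" "cCod C r2' = Y'" "qY \<cdot> r2' = r2 \<cdot> rho" "qT \<cdot> r2' = t2 \<cdot> sig"
     "\<And>x. x \<in> cArr C \<Longrightarrow> cCod C x = RR \<Longrightarrow> qY \<cdot> (r2' \<cdot> x) = (r2 \<cdot> rho) \<cdot> x"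
     "\<And>x. x \<in> cArr C \<Longrightarrow> cCod C x = RR \<Longrightarrow> qT \<cdot> (r2' \<cdot> x) = (t2 \<cdot> sig) \<cdot> x"
    by (rule prod_tup[OF prY, of "r2 \<cdot> rho" RR "t2 \<cdot> sig"]) (auto simp: hom_def)
  obtain hh where hh[simp]: "hh \<in> cArr C" "cDom C hh = PP" "cCod C hh = P" "p1 \<cdot> hh = pS \<cdot> w1" "p2 \<cdot> hh = pS \<cdot> w2"
     "\<And>x. x \<in> cArr C \<Longrightarrow> cCod C x = PP \<Longrightarrow> p1 \<cdot> (hh \<cdot> x) = (pS \<cdot> w1) \<cdot> x"
     "\<And>x. x \<in> cArr C \<Longrightarrow> cCod C x = PP \<Longrightarrow> p2 \<cdot> (hh \<cdot> x) = (pS \<cdot> w2) \<cdot> x"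
    by (rule prod_tup[OF prP, of "pS \<cdot> w1" PP "pS \<cdot> w2"]) (auto simp: hom_def)
  obtain kk where kk[simp]: "kk \<in> cArr C" "cDom C kk = PP" "cCod C kk = Q" "t1 \<cdot> kk = pT \<cdot> w1" "t2 \<cdot> kk = pT \<cdot> w2"
     "\<And>x. x \<in> cArr C \<Longrightarrow> cCod C x = PP \<Longrightarrow> t1 \<cdot> (kk \<cdot> x) = (pT \<cdot> w1) \<cdot> x"
     "\<And>x. x \<in> cArr C \<Longrightarrow> cCod C x = PP \<Longrightarrow> t2 \<cdot> (kk \<cdot> x) = (pT \<cdot> w2) \<cdot> x"
    by (rule prod_tup[OF prQ, of "pT \<cdot> w1" PP "pT \<cdot> w2"]) (auto simp: hom_def)
  obtain mt' where mt'[simp]: "mt' \<in> cArr C" "cDom C mt' = PP" "cCod C mt' = RR" "rho \<cdot> mt' = mt \<cdot> hh" "sig \<cdot> mt' = kk"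
     "\<And>x. x \<in> cArr C \<Longrightarrow> cCod C x = PP \<Longrightarrow> rho \<cdot> (mt' \<cdot> x) = (mt \<cdot> hh) \<cdot> x"
     "\<And>x. x \<in> cArr C \<Longrightarrow> cCod C x = PP \<Longrightarrow> sig \<cdot> (mt' \<cdot> x) = kk \<cdot> x"
    by (rule prod_tup[OF prR, of "mt \<cdot> hh" PP kk]) (auto simp: hom_def)

  have mono': "mono C m'" unfolding mono_def
  proof (intro conjI allI impI)
    show "m' \<in> cArr C" by simp
    fix W g h assume H: "hom C g W (cDom C m') \<and> hom C h W (cDom C m') \<and> m' \<cdot> g = m' \<cdot> h"
    hence g: "g \<in> cArr C" "cDom C g = W" "cCod C g = X" and h: "h \<in> cArr C" "cDom C h = W" "cCod C h = X"
      and e: "m' \<cdot> g = m' \<cdot> h" unfolding hom_def by auto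
    have "m \<cdot> (pS \<cdot> g) = qY \<cdot> (m' \<cdot> g)" using g by simp
    also have "\<dots> = qY \<cdot> (m' \<cdot> h)" using e by simp
    also have "\<dots> = m \<cdot> (pS \<cdot> h)" using h by simp
    finally have e0: "m \<cdot> (pS \<cdot> g) = m \<cdot> (pS \<cdot> h)" .
    have e1: "pS \<cdot> g = pS \<cdot> h" by (rule monoU[OF _ _ e0]) (use g h in \<open>auto simp: hom_def\<close>)
    have "pT \<cdot> g = qT \<cdot> (m' \<cdot> g)" using g by simp
    also have "\<dots> = qT \<cdot> (m' \<cdot> h)" using e by simp
    also have "\<dots> = pT \<cdot> h" using h by simp
    finally have e2: "pT \<cdot> g = pT \<cdot> h" .
    have "cDom C g = cDom C h" using g h by simp
    from prod_eq[OF prX g(1) h(1) this g(3) h(3) e1 e2] show "g = h" .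
  qed
  have eqv: "equiv_rel C Y' RR r1' r2'" unfolding equiv_rel_def
  proof (intro conjI allI impI)
    show "hom C r1' RR Y'" "hom C r2' RR Y'" unfolding hom_def by simp_all
  next
    fix W a b assume H: "hom C a W RR \<and> hom C b W RR \<and> r1' \<cdot> a = r1' \<cdot> b \<and> r2' \<cdot> a = r2' \<cdot> b"
    hence a: "a \<in> cArr C" "cDom C a = W" "cCod C a = RR" and b: "b \<in> cArr C" "cDom C b = W" "cCod C b = RR"
      and e1: "r1' \<cdot> a = r1' \<cdot> b" and e2: "r2' \<cdot> a = r2' \<cdot> b" unfolding hom_def by auto
    have "r1 \<cdot> (rho \<cdot> a) = qY \<cdot> (r1' \<cdot> a)" using a by simp
    also have "\<dots> = qY \<cdot> (r1' \<cdot> b)" using e1 by simp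
    also have "\<dots> = r1 \<cdot> (rho \<cdot> b)" using b by simp
    finally have f1: "r1 \<cdot> (rho \<cdot> a) = r1 \<cdot> (rho \<cdot> b)" .
    have "r2 \<cdot> (rho \<cdot> a) = qY \<cdot> (r2' \<cdot> a)" using a by simp
    also have "\<dots> = qY \<cdot> (r2' \<cdot> b)" using e2 by simp
    also have "\<dots> = r2 \<cdot> (rho \<cdot> b)" using b by simp
    finally have f2: "r2 \<cdot> (rho \<cdot> a) = r2 \<cdot> (rho \<cdot> b)" .
    have g1: "rho \<cdot> a = rho \<cdot> b" by (rule jm[OF _ _ f1 f2]) (use a b in \<open>auto simp: hom_def\<close>)
    have "t1 \<cdot> (sig \<cdot> a) = qT \<cdot> (r1' \<cdot> a)" using a by simp
    also have "\<dots> = qT \<cdot> (r1' \<cdot> b)" using e1 by simp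
    also have "\<dots> = t1 \<cdot> (sig \<cdot> b)" using b by simp
    finally have f3: "t1 \<cdot> (sig \<cdot> a) = t1 \<cdot> (sig \<cdot> b)" .
    have "t2 \<cdot> (sig \<cdot> a) = qT \<cdot> (r2' \<cdot> a)" using a by simp
    also have "\<dots> = qT \<cdot> (r2' \<cdot> b)" using e2 by simp
    also have "\<dots> = t2 \<cdot> (sig \<cdot> b)" using b by simp
    finally have f4: "t2 \<cdot> (sig \<cdot> a) = t2 \<cdot> (sig \<cdot> b)" .
    have g2: "sig \<cdot> a = sig \<cdot> b" by (rule prod_eq[OF prQ _ _ _ _ _ f3 f4]) (use a b in simp_all)
    show "a = b" by (rule prod_eq[OF prR _ _ _ _ _ g1 g2]) (use a b in simp_all)
  next
    fix W x assume "hom C x W Y'"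
    hence x: "x \<in> cArr C" "cDom C x = W" "cCod C x = Y'" unfolding hom_def by auto
    obtain a0 where a0: "hom C a0 W R" "r1 \<cdot> a0 = qY \<cdot> x" "r2 \<cdot> a0 = qY \<cdot> x"
      using rf[of "qY \<cdot> x" W] x unfolding hom_def by auto
    have a0': "a0 \<in> cArr C" "cDom C a0 = W" "cCod C a0 = R" using a0 unfolding hom_def by auto
    obtain d where d: "d \<in> cArr C" "cDom C d = W" "cCod C d = Q" "t1 \<cdot> d = qT \<cdot> x" "t2 \<cdot> d = qT \<cdot> x"
      by (rule prod_tup[OF prQ, of "qT \<cdot> x" W "qT \<cdot> x"]) (use x in \<open>auto simp: hom_def\<close>)
    obtain c where c: "c \<in> cArr C" "cDom C c = W" "cCod C c = RR" "rho \<cdot> c = a0" "sig \<cdot> c = d"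
      by (rule prod_tup[OF prR, of a0 W d]) (use a0' d in \<open>auto simp: hom_def\<close>)
    have "r1' \<cdot> c = x" by (rule prod_eq[OF prY]) (use x c d a0 in simp_all)
    moreover have "r2' \<cdot> c = x" by (rule prod_eq[OF prY]) (use x c d a0 in simp_all)
    ultimately show "\<exists>a. hom C a W RR \<and> r1' \<cdot> a = x \<and> r2' \<cdot> a = x"
      using c unfolding hom_def by blast
  next
    fix W a assume "hom C a W RR"
    hence a: "a \<in> cArr C" "cDom C a = W" "cCod C a = RR" unfolding hom_def by auto
    obtain b0 where b0: "hom C b0 W R" "r1 \<cdot> b0 = r2 \<cdot> (rho \<cdot> a)" "r2 \<cdot> b0 = r1 \<cdot> (rho \<cdot> a)"
      using sy[of "rho \<cdot> a" W] a unfolding hom_def by auto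
    have b0': "b0 \<in> cArr C" "cDom C b0 = W" "cCod C b0 = R" using b0 unfolding hom_def by auto
    obtain d where d: "d \<in> cArr C" "cDom C d = W" "cCod C d = Q" "t1 \<cdot> d = t2 \<cdot> (sig \<cdot> a)" "t2 \<cdot> d = t1 \<cdot> (sig \<cdot> a)"
      by (rule prod_tup[OF prQ, of "t2 \<cdot> (sig \<cdot> a)" W "t1 \<cdot> (sig \<cdot> a)"]) (use a in \<open>auto simp: hom_def\<close>)
    obtain c where c: "c \<in> cArr C" "cDom C c = W" "cCod C c = RR" "rho \<cdot> c = b0" "sig \<cdot> c = d"
      by (rule prod_tup[OF prR, of b0 W d]) (use b0' d in \<open>auto simp: hom_def\<close>)
    have "r1' \<cdot> c = r2' \<cdot> a" by (rule prod_eq[OF prY]) (use a c d b0 in simp_all)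
    moreover have "r2' \<cdot> c = r1' \<cdot> a" by (rule prod_eq[OF prY]) (use a c d b0 in simp_all)
    ultimately show "\<exists>b. hom C b W RR \<and> r1' \<cdot> b = r2' \<cdot> a \<and> r2' \<cdot> b = r1' \<cdot> a"
      using c unfolding hom_def by blast
  next
    fix W a b assume H: "hom C a W RR \<and> hom C b W RR \<and> r2' \<cdot> a = r1' \<cdot> b"
    hence a: "a \<in> cArr C" "cDom C a = W" "cCod C a = RR" and b: "b \<in> cArr C" "cDom C b = W" "cCod C b = RR"
      and e: "r2' \<cdot> a = r1' \<cdot> b" unfolding hom_def by auto
    have "r2 \<cdot> (rho \<cdot> a) = qY \<cdot> (r2' \<cdot> a)" using a by simp
    also have "\<dots> = qY \<cdot> (r1' \<cdot> b)" using e by simp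
    also have "\<dots> = r1 \<cdot> (rho \<cdot> b)" using b by simp
    finally have f: "r2 \<cdot> (rho \<cdot> a) = r1 \<cdot> (rho \<cdot> b)" .
    obtain c0 where c0: "hom C c0 W R" "r1 \<cdot> c0 = r1 \<cdot> (rho \<cdot> a)" "r2 \<cdot> c0 = r2 \<cdot> (rho \<cdot> b)"
      using tr[OF _ _ f] a b unfolding hom_def by auto
    have c0': "c0 \<in> cArr C" "cDom C c0 = W" "cCod C c0 = R" using c0 unfolding hom_def by auto
    obtain d where d: "d \<in> cArr C" "cDom C d = W" "cCod C d = Q" "t1 \<cdot> d = t1 \<cdot> (sig \<cdot> a)" "t2 \<cdot> d = t2 \<cdot> (sig \<cdot> b)"
      by (rule prod_tup[OF prQ, of "t1 \<cdot> (sig \<cdot> a)" W "t2 \<cdot> (sig \<cdot> b)"]) (use a b in \<open>auto simp: hom_def\<close>)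
    obtain c where c: "c \<in> cArr C" "cDom C c = W" "cCod C c = RR" "rho \<cdot> c = c0" "sig \<cdot> c = d"
      by (rule prod_tup[OF prR, of c0 W d]) (use c0' d in \<open>auto simp: hom_def\<close>)
    have "r1' \<cdot> c = r1' \<cdot> a" by (rule prod_eq[OF prY]) (use a c d c0 in simp_all)
    moreover have "r2' \<cdot> c = r2' \<cdot> b" by (rule prod_eq[OF prY]) (use b c d c0 in simp_all)
    ultimately show "\<exists>c. hom C c W RR \<and> r1' \<cdot> c = r1' \<cdot> a \<and> r2' \<cdot> c = r2' \<cdot> b"
      using c unfolding hom_def by blast
  qed
  have c1: "r1' \<cdot> mt' = m' \<cdot> w1" by (rule prod_eq[OF prY]) simp_all
  have c2: "r2' \<cdot> mt' = m' \<cdot> w2" by (rule prod_eq[OF prY]) simp_all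
  have pb': "is_pullback C r1' m' PP mt' w1" unfolding is_pullback_def
  proof (intro conjI allI impI)
    show "r1' \<in> cArr C" "m' \<in> cArr C" "cCod C r1' = cCod C m'" by simp_all
    show "hom C mt' PP (cDom C r1')" "hom C w1 PP (cDom C m')" unfolding hom_def by simp_all
    show "r1' \<cdot> mt' = m' \<cdot> w1" by (rule c1)
  next
    fix W q1 q2 assume H: "hom C q1 W (cDom C r1') \<and> hom C q2 W (cDom C m') \<and> r1' \<cdot> q1 = m' \<cdot> q2"
    hence q1: "q1 \<in> cArr C" "cDom C q1 = W" "cCod C q1 = RR" and q2: "q2 \<in> cArr C" "cDom C q2 = W" "cCod C q2 = X"
      and e: "r1' \<cdot> q1 = m' \<cdot> q2" unfolding hom_def by auto
    have "r1 \<cdot> (rho \<cdot> q1) = qY \<cdot> (r1' \<cdot> q1)" using q1 by simp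
    also have "\<dots> = qY \<cdot> (m' \<cdot> q2)" using e by simp
    also have "\<dots> = m \<cdot> (pS \<cdot> q2)" using q2 by simp
    finally have ea: "r1 \<cdot> (rho \<cdot> q1) = m \<cdot> (pS \<cdot> q2)" .
    have "t1 \<cdot> (sig \<cdot> q1) = qT \<cdot> (r1' \<cdot> q1)" using q1 by simp
    also have "\<dots> = qT \<cdot> (m' \<cdot> q2)" using e by simp
    also have "\<dots> = pT \<cdot> q2" using q2 by simp
    finally have et1: "t1 \<cdot> (sig \<cdot> q1) = pT \<cdot> q2" .
    have "\<exists>!v. hom C v W P \<and> mt \<cdot> v = rho \<cdot> q1 \<and> p1 \<cdot> v = pS \<cdot> q2"
      by (rule pbU[OF _ _ ea]) (use q1 q2 in \<open>auto simp: hom_def\<close>)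
    then obtain v where v: "hom C v W P" "mt \<cdot> v = rho \<cdot> q1" "p1 \<cdot> v = pS \<cdot> q2"
      and vu: "\<And>v2. hom C v2 W P \<Longrightarrow> mt \<cdot> v2 = rho \<cdot> q1 \<Longrightarrow> p1 \<cdot> v2 = pS \<cdot> q2 \<Longrightarrow> v2 = v" by blast
    have v': "v \<in> cArr C" "cDom C v = W" "cCod C v = P" using v unfolding hom_def by auto
    obtain b where b: "b \<in> cArr C" "cDom C b = W" "cCod C b = X" "pS \<cdot> b = p2 \<cdot> v" "pT \<cdot> b = t2 \<cdot> (sig \<cdot> q1)"
      by (rule prod_tup[OF prX, of "p2 \<cdot> v" W "t2 \<cdot> (sig \<cdot> q1)"]) (use v' q1 in \<open>auto simp: hom_def\<close>)
    obtain u where u: "u \<in> cArr C" "cDom C u = W" "cCod C u = PP" "w1 \<cdot> u = q2" "w2 \<cdot> u = b"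
      by (rule prod_tup[OF prPP, of q2 W b]) (use q2 b in \<open>auto simp: hom_def\<close>)
    have hu: "hh \<cdot> u = v" by (rule prod_eq[OF prP]) (use u v' v b in simp_all)
    have ku: "kk \<cdot> u = sig \<cdot> q1" by (rule prod_eq[OF prQ]) (use u q1 b et1 in simp_all)
    have mu: "mt' \<cdot> u = q1" by (rule prod_eq[OF prR]) (use u q1 hu ku v in simp_all)
    show "\<exists>!u. hom C u W PP \<and> mt' \<cdot> u = q1 \<and> w1 \<cdot> u = q2"
    proof (rule ex1I[of _ u])
      show "hom C u W PP \<and> mt' \<cdot> u = q1 \<and> w1 \<cdot> u = q2" using u mu unfolding hom_def by simp
      fix u2 assume "hom C u2 W PP \<and> mt' \<cdot> u2 = q1 \<and> w1 \<cdot> u2 = q2"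
      hence u2: "u2 \<in> cArr C" "cDom C u2 = W" "cCod C u2 = PP" and eu1: "mt' \<cdot> u2 = q1" and eu2: "w1 \<cdot> u2 = q2"
        unfolding hom_def by auto
      have "mt \<cdot> (hh \<cdot> u2) = rho \<cdot> (mt' \<cdot> u2)" using u2 by simp
      also have "\<dots> = rho \<cdot> q1" using eu1 by simp
      finally have x1: "mt \<cdot> (hh \<cdot> u2) = rho \<cdot> q1" .
      have "p1 \<cdot> (hh \<cdot> u2) = pS \<cdot> (w1 \<cdot> u2)" using u2 by simp
      also have "\<dots> = pS \<cdot> q2" using eu2 by simp
      finally have x2: "p1 \<cdot> (hh \<cdot> u2) = pS \<cdot> q2" .
      have hu2: "hh \<cdot> u2 = v" by (rule vu[OF _ x1 x2]) (use u2 in \<open>auto simp: hom_def\<close>)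
      have "pS \<cdot> (w2 \<cdot> u2) = p2 \<cdot> (hh \<cdot> u2)" using u2 by simp
      also have "\<dots> = pS \<cdot> b" using hu2 b by simp
      finally have y1: "pS \<cdot> (w2 \<cdot> u2) = pS \<cdot> b" .
      have "pT \<cdot> (w2 \<cdot> u2) = t2 \<cdot> (kk \<cdot> u2)" using u2 by simp
      also have "\<dots> = t2 \<cdot> (sig \<cdot> (mt' \<cdot> u2))" using u2 by simp
      also have "\<dots> = pT \<cdot> b" using eu1 b by simp
      finally have y2: "pT \<cdot> (w2 \<cdot> u2) = pT \<cdot> b" .
      have z2: "w2 \<cdot> u2 = w2 \<cdot> u" by (subst u(5), rule prod_eq[OF prX _ _ _ _ _ y1 y2]) (use u2 b in simp_all)
      have z1: "w1 \<cdot> u2 = w1 \<cdot> u" using eu2 u(4) by simp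
      show "u2 = u" by (rule prod_eq[OF prPP _ _ _ _ _ z1 z2]) (use u2 u in simp_all)
    qed
  qed
  show ?thesis unfolding bourn_normal_def
    apply (rule conjI[OF mono'])
    apply (rule exI[of _ RR], rule exI[of _ r1'], rule exI[of _ r2'], rule exI[of _ PP],
      rule exI[of _ w1], rule exI[of _ w2], rule exI[of _ mt'])
    using eqv prPP c1 c2 pb' unfolding hom_def by simp
qed
end


context pcat
begin

lemma main_S:
  assumes prX: "is_product C S T X pS pT"
  shows "(proto_complete C X \<longrightarrow> proto_complete C S) \<and> (complete_obj C X \<longrightarrow> complete_obj C S) \<and>
         (complete_star C X \<longrightarrow> complete_star C S) \<and> (strong_complete C X \<longrightarrow> strong_complete C S)"
proof -
  note pX = prod_facts[OF prX]
  have build: "\<exists>Y' qY qT m'. xfer C Z S T X pS pT m (cCod C m) Y' qY qT m'"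
    if m: "m \<in> cArr C" "cDom C m = S" for m
  proof -
    obtain Y' qY qT where prY: "is_product C (cCod C m) T Y' qY qT" using prod_ex[of "cCod C m" T] m pX by auto
    note pY = prod_facts[OF prY]
    obtain m' where m': "m' \<in> cArr C" "cDom C m' = X" "cCod C m' = Y'" "qY \<cdot> m' = m \<cdot> pS" "qT \<cdot> m' = pT"
      by (rule prod_tup[OF prY, of "m \<cdot> pS" X pT]) (use m pX in \<open>auto simp: hom_def\<close>)
    have "xfer C Z S T X pS pT m (cCod C m) Y' qY qT m'"
      unfolding xfer_def xfer_axioms_def using pcat_axioms prX prY m m' by blast
    thus ?thesis by blast
  qed
  have ps: "protosplit_mono C m'" if x: "xfer C Z S T X pS pT m Y Y' qY qT m'" and p: "protosplit_mono C m"
    for m Y Y' qY qT m'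
  proof -
    obtain p where p: "split_epi C p" "is_kernel C m p" using p unfolding protosplit_mono_def by blast
    have "cDom C p = Y" using p(2) xfer.m[OF x] unfolding is_kernel_def by auto
    hence "split_epi C (p \<cdot> qY)" by (rule xfer.L3[OF x p(1)])
    moreover have "is_kernel C m' (p \<cdot> qY)" by (rule xfer.L2[OF x p(2)])
    ultimately show ?thesis unfolding protosplit_mono_def by blast
  qed
  have dm': "cDom C m' = X" if x: "xfer C Z S T X pS pT m Y Y' qY qT m'" for m Y Y' qY qT m'
    using xfer.m'[OF x] by simp
  show ?thesis
  proof (intro conjI impI)
    assume H: "proto_complete C X"
    show "proto_complete C S" unfolding proto_complete_def
    proof (intro allI impI)
      fix m assume a: "protosplit_mono C m \<and> cDom C m = S"
      hence "m \<in> cArr C" unfolding protosplit_mono_def is_kernel_def by auto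
      then obtain Y' qY qT m' where x: "xfer C Z S T X pS pT m (cCod C m) Y' qY qT m'" using build a by blast
      have "split_mono C m'" using H ps[OF x] dm'[OF x] a unfolding proto_complete_def by blast
      thus "split_mono C m" by (rule xfer.L1[OF x])
    qed
  next
    assume H: "complete_obj C X"
    show "complete_obj C S" unfolding complete_obj_def
    proof (intro allI impI)
      fix m assume a: "normal_mono C m \<and> cDom C m = S"
      then obtain f where f: "is_kernel C m f" unfolding normal_mono_def by blast
      hence "m \<in> cArr C" unfolding is_kernel_def by auto
      then obtain Y' qY qT m' where x: "xfer C Z S T X pS pT m (cCod C m) Y' qY qT m'" using build a by blast
      have "normal_mono C m'" using xfer.L2[OF x f] unfolding normal_mono_def by blast
      hence "split_mono C m'" using H dm'[OF x] unfolding complete_obj_def by blast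
      thus "split_mono C m" by (rule xfer.L1[OF x])
    qed
  next
    assume H: "complete_star C X"
    show "complete_star C S" unfolding complete_star_def
    proof (intro allI impI)
      fix m assume a: "bourn_normal C m \<and> cDom C m = S"
      hence "m \<in> cArr C" unfolding bourn_normal_def mono_def by auto
      then obtain Y' qY qT m' where x: "xfer C Z S T X pS pT m (cCod C m) Y' qY qT m'" using build a by blast
      have "bourn_normal C m'" using xfer.L5[OF x] a by blast
      hence "split_mono C m'" using H dm'[OF x] unfolding complete_star_def by blast
      thus "split_mono C m" by (rule xfer.L1[OF x])
    qed
  next
    assume H: "strong_complete C X"
    show "strong_complete C S" unfolding strong_complete_def
    proof (intro allI impI)
      fix m assume a: "protosplit_mono C m \<and> cDom C m = S"
      hence "m \<in> cArr C" unfolding protosplit_mono_def is_kernel_def by auto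
      then obtain Y' qY qT m' where x: "xfer C Z S T X pS pT m (cCod C m) Y' qY qT m'" using build a by blast
      have "\<exists>!r. is_retraction C r m'" using H ps[OF x] dm'[OF x] a unfolding strong_complete_def by blast
      thus "\<exists>!r. is_retraction C r m" by (rule xfer.L4[OF x])
    qed
  qed
qed

end

theorem proposition4p12:
  fixes C :: "('o, 'a) cat" and S T X :: 'o and pS pT :: 'a
  assumes "category C" and "pointed C" and "finitely_complete C" and "protomodular C"
    and "is_product C S T X pS pT"
  shows "(proto_complete C X \<longrightarrow> proto_complete C S \<and> proto_complete C T) \<and>
         (complete_obj C X \<longrightarrow> complete_obj C S \<and> complete_obj C T) \<and>
         (complete_star C X \<longrightarrow> complete_star C S \<and> complete_star C T) \<and>
         (strong_complete C X \<longrightarrow> strong_complete C S \<and> strong_complete C T)"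
proof -
  obtain Z where Z: "zero_obj C Z" using assms(2) unfolding pointed_def by blast
  have pc: "pcat C Z" unfolding pcat_def using assms(1,3) Z by blast
  have 1: "is_product C T S X pT pS" by (rule pcat.prod_sym[OF pc assms(5)])
  show ?thesis using pcat.main_S[OF pc assms(5)] pcat.main_S[OF pc 1] by blast
qed

end
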